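(* Let $X$ be an infinite-dimensional complex Banach space and let $A\in\mathcal{B}(X)$ be nonzero. Then the following are equivalent: (i) $A$ has rank one. (ii) $\dim K(TA+AT)\le 2$ for every $T\in\mathcal{B}(X)$.
   Context: $\mathcal{B}(X)$ denotes the algebra of all bounded linear operators on $X$. For $T\in\mathcal{B}(X)$, the analytic core $K(T)$ is the set of all $x\in X$ for which there exist $\delta>0$ and a sequence $(x_n)_{n\ge 0}\subset X$ with $x_0=x$, $Tx_{n+1}=x_n$ and $\|x_n\|\le \delta^n\|x\|$ for all $n\ge 0$. *)

theory Defs
  imports "HOL-Analysis.Analysis"
begin

class complex_vector = real_vector +
  fixes scaleC :: "complex \<Rightarrow> 'a \<Rightarrow> 'a" (infixr "*\<^sub>C" 75)
  assumes scaleC_add_right: "a *\<^sub>C (x + y) = a *\<^sub>C x + a *\<^sub>C y"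
    and scaleC_add_left: "(a + b) *\<^sub>C x = a *\<^sub>C x + b *\<^sub>C x"
    and scaleC_scaleC: "a *\<^sub>C (b *\<^sub>C x) = (a * b) *\<^sub>C x"
    and scaleC_one: "1 *\<^sub>C x = x"
    and scaleR_scaleC: "r *\<^sub>R x = complex_of_real r *\<^sub>C x"

class complex_normed_vector = complex_vector + real_normed_vector +
  assumes norm_scaleC: "norm (a *\<^sub>C x) = cmod a * norm x"

lemma complex_vector_space: "vector_space ((*\<^sub>C) :: complex \<Rightarrow> 'a::complex_vector \<Rightarrow> 'a)"
  by unfold_locales (simp_all add: scaleC_add_right scaleC_add_left scaleC_scaleC scaleC_one)

abbreviation cspan :: "'a::complex_vector set \<Rightarrow> 'a set" where
  "cspan \<equiv> module.span (*\<^sub>C)"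

abbreviation cdim :: "'a::complex_vector set \<Rightarrow> nat" where
  "cdim \<equiv> vector_space.dim (*\<^sub>C)"

definition cfinite_dim :: "'a::complex_vector set \<Rightarrow> bool" where
  "cfinite_dim V \<longleftrightarrow> (\<exists>B. finite B \<and> V \<subseteq> cspan B)"

definition bounded_clinear :: "('a::complex_normed_vector \<Rightarrow> 'b::complex_normed_vector) \<Rightarrow> bool" where
  "bounded_clinear T \<longleftrightarrow> bounded_linear T \<and> (\<forall>c x. T (c *\<^sub>C x) = c *\<^sub>C T x)"

definition rank_one :: "('a::complex_vector \<Rightarrow> 'b::complex_vector) \<Rightarrow> bool" where
  "rank_one A \<longleftrightarrow> cfinite_dim (range A) \<and> cdim (range A) = 1"

definition analytic_core :: "('a::real_normed_vector \<Rightarrow> 'a) \<Rightarrow> 'a set" where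
  "analytic_core T = {x. \<exists>\<delta>>0. \<exists>xs :: nat \<Rightarrow> 'a. xs 0 = x \<and> (\<forall>n. T (xs (Suc n)) = xs n)
       \<and> (\<forall>n. norm (xs n) \<le> \<delta> ^ n * norm x)}"

end

theory Submission
  imports Defs
begin


lemma real_HB:
  fixes x0 :: "'a::real_normed_vector"
  shows "\<exists>U. bounded_linear U \<and> U x0 = norm x0 \<and> (\<forall>x. \<bar>U x\<bar> \<le> norm x)"
proof -
  define P where "P = {G :: ('a \<times> real) set. subspace G \<and> (x0, norm x0) \<in> G \<and> (\<forall>p\<in>G. snd p \<le> norm (fst p))}"
  have "\<exists>M\<in>P. \<forall>G\<in>P. M \<subseteq> G \<longrightarrow> G = M"
  proof (rule Zorn_Lemma2, intro ballI)
    fix C assume C: "C \<in> chains P"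
    show "\<exists>U\<in>P. \<forall>X\<in>C. X \<subseteq> U"
    proof (cases "C = {}")
      case True
      have "span {(x0, norm x0)} \<in> P"
        unfolding P_def
      proof (intro CollectI conjI ballI)
        fix p assume "p \<in> span {(x0, norm x0)}"
        then obtain k where "p = k *\<^sub>R (x0, norm x0)" by (auto simp: span_singleton)
        then show "snd p \<le> norm (fst p)" by (simp add: mult_right_mono)
      qed (auto intro: span_base)
      then show ?thesis using True by blast
    next
      case False
      have CP: "C \<subseteq> P" and ch: "\<And>X Y. X \<in> C \<Longrightarrow> Y \<in> C \<Longrightarrow> X \<subseteq> Y \<or> Y \<subseteq> X"
        using C by (auto simp: chains_def chain_subset_def)
      have sub: "\<And>X. X \<in> C \<Longrightarrow> subspace X" using CP by (auto simp: P_def)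
      have "\<Union>C \<in> P"
        unfolding P_def
      proof (intro CollectI conjI ballI)
        show "subspace (\<Union>C)"
          unfolding subspace_def
        proof (intro conjI ballI allI)
          show "0 \<in> \<Union>C" using False sub subspace_0 by blast
        next
          fix x y assume "x \<in> \<Union>C" "y \<in> \<Union>C"
          then obtain X Y where "X \<in> C" "Y \<in> C" "x \<in> X" "y \<in> Y" by blast
          then show "x + y \<in> \<Union>C" using ch[of X Y] sub subspace_add by blast
        next
          fix c x assume "x \<in> \<Union>C"
          then show "c *\<^sub>R x \<in> \<Union>C" using sub subspace_scale by blast
        qed
        show "(x0, norm x0) \<in> \<Union>C" using False CP by (auto simp: P_def)
        fix p assume "p \<in> \<Union>C"
        then show "snd p \<le> norm (fst p)" using CP by (auto simp: P_def)
      qed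
      then show ?thesis by blast
    qed
  qed
  then obtain M where MP: "M \<in> P" and Mmax: "\<And>G. G \<in> P \<Longrightarrow> M \<subseteq> G \<Longrightarrow> G = M" by blast
  have Msub: "subspace M" and Mx0: "(x0, norm x0) \<in> M" and Mdom: "\<And>z d. (z, d) \<in> M \<Longrightarrow> d \<le> norm z"
    using MP by (auto simp: P_def)
  have full: "\<exists>c. (y, c) \<in> M" for y
  proof (rule ccontr)
    assume ny: "\<not> (\<exists>c. (y, c) \<in> M)"
    define L where "L = (\<lambda>p. snd p - norm (fst p - y)) ` M"
    have key: "a - norm (u - y) \<le> norm (v + y) - b" if "(u, a) \<in> M" "(v, b) \<in> M" for u a v b
    proof -
      have "(u + v, a + b) \<in> M" using that Msub subspace_add by fastforce
      then have "a + b \<le> norm (u + v)" by (rule Mdom)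
      also have "\<dots> \<le> norm (u - y) + norm (v + y)"
        using norm_triangle_ineq[of "u - y" "v + y"] by simp
      finally show ?thesis by simp
    qed
    have Lne: "L \<noteq> {}" using Mx0 by (auto simp: L_def)
    have Lbd: "\<And>l. l \<in> L \<Longrightarrow> l \<le> norm (v + y) - b" if "(v, b) \<in> M" for v b
      using key that by (auto simp: L_def)
    define c where "c = Sup L"
    have c1: "a - norm (u - y) \<le> c" if "(u, a) \<in> M" for u a
      unfolding c_def
    proof (rule cSup_upper)
      show "a - norm (u - y) \<in> L" using that by (force simp: L_def)
      show "bdd_above L" using Lbd[OF Mx0] by (auto simp: bdd_above_def)
    qed
    have c2: "c \<le> norm (v + y) - b" if "(v, b) \<in> M" for v b
      unfolding c_def by (rule cSup_least[OF Lne Lbd[OF that]])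
    define M' where "M' = span (insert (y, c) M)"
    have spM: "span M = M" using Msub by (simp add: span_eq_iff)
    have "M' \<in> P"
      unfolding P_def
    proof (intro CollectI conjI ballI)
      show "subspace M'" by (simp add: M'_def)
      show "(x0, norm x0) \<in> M'" unfolding M'_def using Mx0 by (simp add: span_base)
      fix p assume "p \<in> M'"
      then obtain k where k: "p - k *\<^sub>R (y, c) \<in> M"
        unfolding M'_def span_insert spM by blast
      obtain z d where p: "p = (z, d)" by (cases p)
      have zd: "(z - k *\<^sub>R y, d - k * c) \<in> M" using k p by simp
      have "d \<le> norm z"
      proof (cases "k = 0")
        case True then show ?thesis using zd Mdom by simp
      next
        case False
        show ?thesis
        proof (cases "k > 0")
          case True
          have "(inverse k *\<^sub>R (z - k *\<^sub>R y), inverse k * (d - k * c)) \<in> M"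
            using subspace_scale[OF Msub zd, of "inverse k"] by simp
          moreover have "inverse k *\<^sub>R (z - k *\<^sub>R y) = inverse k *\<^sub>R z - y"
            "inverse k * (d - k * c) = d / k - c" using True
            by (auto simp: algebra_simps field_simps)
          ultimately have "c \<le> norm (inverse k *\<^sub>R z - y + y) - (d / k - c)"
            using c2 by force
          then have "d / k \<le> norm z / k" using True by (simp add: divide_inverse mult.commute)
          then show ?thesis using True by (simp add: divide_le_cancel)
        next
          case False
          with \<open>k \<noteq> 0\<close> have kn: "k < 0" by simp
          define s where "s = - k"
          have s: "s > 0" using kn by (simp add: s_def)
          have "(inverse s *\<^sub>R (z - k *\<^sub>R y), inverse s * (d - k * c)) \<in> M"
            using subspace_scale[OF Msub zd, of "inverse s"] by simp
          moreover have "inverse s *\<^sub>R (z - k *\<^sub>R y) = inverse s *\<^sub>R z + y"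
            "inverse s * (d - k * c) = d / s + c" using s
            by (auto simp: algebra_simps field_simps s_def)
          ultimately have "d / s + c - norm (inverse s *\<^sub>R z + y - y) \<le> c"
            using c1 by force
          then have "d / s \<le> norm z / s" using s by (simp add: divide_inverse mult.commute)
          then show ?thesis using s by (simp add: divide_le_cancel)
        qed
      qed
      then show "snd p \<le> norm (fst p)" using p by simp
    qed
    moreover have "M \<subseteq> M'" unfolding M'_def by (meson span_superset subset_insertI subset_trans)
    ultimately have "M' = M" by (rule Mmax)
    moreover have "(y, c) \<in> M'" unfolding M'_def by (simp add: span_base)
    ultimately show False using ny by blast
  qed
  have uniq: "a = b" if "(y, a) \<in> M" "(y, b) \<in> M" for y a b
  proof -
    have "(y, a) - (y, b) \<in> M" "(y, b) - (y, a) \<in> M" using that Msub subspace_diff by blast+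
    then have "a - b \<le> 0" "b - a \<le> 0" using Mdom by force+
    then show ?thesis by simp
  qed
  define U where "U y = (THE c. (y, c) \<in> M)" for y
  have UM: "(y, U y) \<in> M" for y
    unfolding U_def using full[of y] uniq by (metis theI)
  have Uadd: "U (x + y) = U x + U y" for x y
    using uniq[OF UM[of "x + y"]] subspace_add[OF Msub UM[of x] UM[of y]] by simp
  have Uscale: "U (r *\<^sub>R x) = r * U x" for r x
    using uniq[OF UM[of "r *\<^sub>R x"]] subspace_scale[OF Msub UM[of x], of r] by simp
  have Ule: "U x \<le> norm x" for x using Mdom[OF UM[of x]] .
  have Uabs: "\<bar>U x\<bar> \<le> norm x" for x
    using Ule[of x] Ule[of "- x"] Uscale[of "-1" x] by simp
  have "bounded_linear U"
    by (rule bounded_linear_intro[where K=1]) (use Uadd Uscale Uabs in auto)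
  moreover have "U x0 = norm x0" using uniq[OF UM Mx0] .
  ultimately show ?thesis using Uabs by blast
qed



interpretation cv: vector_space "scaleC :: complex \<Rightarrow> 'a \<Rightarrow> 'a::complex_vector"
  by (rule complex_vector_space)

lemma cmult_vs: "vector_space ((*) :: complex \<Rightarrow> complex \<Rightarrow> complex)"
  by unfold_locales (auto simp: algebra_simps)

lemma cmod: "module (scaleC :: complex \<Rightarrow> 'a::complex_vector \<Rightarrow> 'a)"
  by (simp add: module_iff_vector_space complex_vector_space)

definition cfunc :: "('a::complex_normed_vector \<Rightarrow> complex) \<Rightarrow> bool" where
  "cfunc F \<longleftrightarrow> bounded_linear F \<and> (\<forall>c x. F (c *\<^sub>C x) = c * F x)"

lemma bclin_hom: "bounded_clinear A \<Longrightarrow> module_hom scaleC scaleC A"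
  unfolding bounded_clinear_def module_hom_def module_hom_axioms_def
  using linear_add[of A]
  by (auto simp: bounded_linear.linear cmod)

lemma cfunc_hom: "cfunc F \<Longrightarrow> module_hom scaleC (*) F"
  unfolding cfunc_def module_hom_def module_hom_axioms_def
  using vector_space_over_itself.module_axioms
  by (auto simp: bounded_linear.linear linear_add cmod)

lemma cfunc_span0:
  assumes "cfunc F" "\<And>b. b \<in> B \<Longrightarrow> F b = 0" "x \<in> cspan B"
  shows "F x = 0"
proof -
  interpret module_hom scaleC "(*)" F by (rule cfunc_hom[OF assms(1)])
  have "F x \<in> F ` cspan B" using assms(3) by blast
  also have "\<dots> = vector_space_over_itself.span (F ` B)" by (simp add: span_image)
  also have "F ` B \<subseteq> {0}" using assms(2) by auto
  then have "vector_space_over_itself.span (F ` B) \<subseteq> vector_space_over_itself.span {0}" by (rule vector_space_over_itself.span_mono)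
  finally show ?thesis by simp
qed

lemma scaleC_real: "complex_of_real r *\<^sub>C x = r *\<^sub>R x"
  by (simp add: scaleR_scaleC)

lemma cfunc_base:
  fixes x0 :: "'a::complex_normed_vector"
  assumes "x0 \<noteq> 0"
  shows "\<exists>F. cfunc F \<and> F x0 = 1"
proof -
  obtain U where U: "bounded_linear U" "U x0 = norm x0" "\<And>x. \<bar>U x\<bar> \<le> norm x"
    using real_HB[of x0] by blast
  interpret U: bounded_linear U by (rule U(1))
  define G where "G x = complex_of_real (U x) - \<i> * complex_of_real (U (\<i> *\<^sub>C x))" for x
  have Gadd: "G (x + y) = G x + G y" for x y
    by (simp add: G_def scaleC_add_right U.add algebra_simps)
  have UR: "U (r *\<^sub>R x) = r * U x" for r x by (simp add: U.scale)
  have Gsc: "G (c *\<^sub>C x) = c * G x" for c x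
  proof -
    obtain a b where c: "c = Complex a b" by (cases c)
    have ce: "c = complex_of_real a + complex_of_real b * \<i>" using c
      by (simp add: complex_eq_iff)
    have e1: "c *\<^sub>C x = a *\<^sub>R x + b *\<^sub>R (\<i> *\<^sub>C x)"
      by (simp only: ce scaleC_add_left flip: scaleC_scaleC scaleC_real)
    have "\<i> *\<^sub>C (c *\<^sub>C x) = (complex_of_real (-b) + complex_of_real a * \<i>) *\<^sub>C x"
      by (simp add: scaleC_scaleC ce algebra_simps)
    also have "\<dots> = (- b) *\<^sub>R x + a *\<^sub>R (\<i> *\<^sub>C x)"
      by (simp only: scaleC_add_left flip: scaleC_scaleC scaleC_real)
    finally have e2: "\<i> *\<^sub>C (c *\<^sub>C x) = (- b) *\<^sub>R x + a *\<^sub>R (\<i> *\<^sub>C x)" .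
    have "G (c *\<^sub>C x) = complex_of_real (U (a *\<^sub>R x + b *\<^sub>R (\<i> *\<^sub>C x)))
       - \<i> * complex_of_real (U ((- b) *\<^sub>R x + a *\<^sub>R (\<i> *\<^sub>C x)))"
      by (unfold G_def, subst e2, subst e1, rule refl)
    also have "\<dots> = c * G x"
      unfolding U.add UR G_def ce by (simp add: algebra_simps)
    finally show ?thesis .
  qed
  have Gbd: "norm (G x) \<le> norm x * 2" for x
  proof -
    have "norm (G x) \<le> norm (complex_of_real (U x)) + norm (\<i> * complex_of_real (U (\<i> *\<^sub>C x)))"
      unfolding G_def by (rule norm_triangle_ineq4)
    also have "\<dots> = \<bar>U x\<bar> + \<bar>U (\<i> *\<^sub>C x)\<bar>" by (simp add: norm_mult)
    also have "\<dots> \<le> norm x + norm (\<i> *\<^sub>C x)" using U(3) by (intro add_mono) auto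
    also have "norm (\<i> *\<^sub>C x) = norm x" by (simp add: norm_scaleC)
    finally show ?thesis by simp
  qed
  have Gbl: "bounded_linear G"
  proof (rule bounded_linear_intro[where K=2])
    show "G (r *\<^sub>R x) = r *\<^sub>R G x" for r x
      using Gsc[of "complex_of_real r" x] by (simp add: scaleC_real scaleR_conv_of_real)
  qed (use Gadd Gbd in auto)
  have G0: "G x0 \<noteq> 0"
  proof
    assume "G x0 = 0"
    then have "Re (G x0) = 0" by simp
    then show False using U(2) assms by (simp add: G_def)
  qed
  define F where "F x = G x / G x0" for x
  have "cfunc F"
    unfolding cfunc_def
  proof
    show "bounded_linear F" unfolding F_def
      using bounded_linear_compose[OF bounded_linear_divide Gbl, of "G x0"] by (simp add: o_def)
    show "\<forall>c x. F (c *\<^sub>C x) = c * F x" by (simp add: F_def Gsc)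
  qed
  moreover have "F x0 = 1" using G0 by (simp add: F_def)
  ultimately show ?thesis by blast
qed

lemma cfunc_comb: "cfunc f \<Longrightarrow> cfunc g \<Longrightarrow> cfunc (\<lambda>x. f x - c * g x)"
  unfolding cfunc_def
  by (auto intro!: bounded_linear_sub bounded_linear_const_mult simp: algebra_simps)

lemma cfunc_sep:
  fixes B :: "'a::complex_normed_vector set"
  assumes "finite B"
  shows "x0 \<notin> cspan B \<Longrightarrow> \<exists>F. cfunc F \<and> (\<forall>b\<in>B. F b = 0) \<and> F x0 = 1"
  using assms
proof (induction B arbitrary: x0 rule: finite_induct)
  case empty
  then show ?case using cfunc_base[of x0] by auto
next
  case (insert b B)
  show ?case
  proof (cases "b \<in> cspan B")
    case True
    then have "cspan (insert b B) = cspan B" by (rule cv.span_redundant)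
    with insert.prems have "x0 \<notin> cspan B" by simp
    then obtain F where F: "cfunc F" "\<forall>b\<in>B. F b = 0" "F x0 = 1"
      using insert.IH by blast
    have "F b = 0" using cfunc_span0[OF F(1)] F(2) True by blast
    then show ?thesis using F by auto
  next
    case False
    obtain g where g: "cfunc g" "\<forall>b\<in>B. g b = 0" "g b = 1" using insert.IH[OF False] by blast
    define y where "y = x0 - g x0 *\<^sub>C b"
    have "y \<notin> cspan B"
    proof
      assume "y \<in> cspan B"
      then have "y \<in> cspan (insert b B)" by (meson cv.span_mono subset_insertI subsetD)
      moreover have "g x0 *\<^sub>C b \<in> cspan (insert b B)" by (simp add: cv.span_base cv.span_scale)
      ultimately have "y + g x0 *\<^sub>C b \<in> cspan (insert b B)" by (rule cv.span_add)
      then show False using insert.prems by (simp add: y_def)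
    qed
    then obtain h where h: "cfunc h" "\<forall>b\<in>B. h b = 0" "h y = 1" using insert.IH by blast
    have hl: "h (u + v) = h u + h v" "h (c *\<^sub>C u) = c * h u" for u v c
      using h(1) unfolding cfunc_def by (auto simp: linear_add bounded_linear.linear)
    have hx0: "h x0 = 1 + g x0 * h b"
      using hl h(3) unfolding y_def by (metis diff_add_cancel)
    define f where "f x = h x - h b * g x" for x
    have "cfunc f" unfolding f_def by (rule cfunc_comb[OF h(1) g(1)])
    moreover have "\<forall>b'\<in>insert b B. f b' = 0" using g h by (auto simp: f_def)
    moreover have "f x0 = 1" by (simp add: f_def hx0)
    ultimately show ?thesis by blast
  qed
qed



lemma bclin_lin:
  assumes "bounded_clinear S"
  shows "S (x + y) = S x + S y" "S (c *\<^sub>C x) = c *\<^sub>C S x" "S 0 = 0"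
    "S (x - y) = S x - S y" "S (r *\<^sub>R x) = r *\<^sub>R S x"
  using assms unfolding bounded_clinear_def
  by (auto simp: linear_add linear_diff bounded_linear.linear linear_0 linear_scale)

lemma cfunc_op: "cfunc F \<Longrightarrow> bounded_clinear (\<lambda>x. F x *\<^sub>C u)"
proof -
  assume F: "cfunc F"
  then have Fb: "bounded_linear F" and Fh: "\<And>c x. F (c *\<^sub>C x) = c * F x"
    by (auto simp: cfunc_def)
  interpret F: bounded_linear F by (rule Fb)
  obtain K where K: "\<And>x. norm (F x) \<le> norm x * K" using F.bounded by blast
  have "bounded_linear (\<lambda>x. F x *\<^sub>C u)"
  proof (rule bounded_linear_intro[where K="K * norm u"])
    show "F (x + y) *\<^sub>C u = F x *\<^sub>C u + F y *\<^sub>C u" for x y by (simp add: F.add scaleC_add_left)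
    show "F (r *\<^sub>R x) *\<^sub>C u = r *\<^sub>R (F x *\<^sub>C u)" for r x
      by (simp add: scaleR_scaleC scaleC_scaleC Fh)
    show "norm (F x *\<^sub>C u) \<le> norm x * (K * norm u)" for x
      using mult_right_mono[OF K[of x], of "norm u"] by (simp add: norm_scaleC mult.assoc)
  qed
  then show ?thesis unfolding bounded_clinear_def by (simp add: Fh scaleC_scaleC)
qed

lemma bclin_sum:
  assumes "\<And>i. i \<in> I \<Longrightarrow> bounded_clinear (f i)"
  shows "bounded_clinear (\<lambda>x. \<Sum>i\<in>I. f i x)"
  unfolding bounded_clinear_def
proof (intro conjI allI)
  show "bounded_linear (\<lambda>x. \<Sum>i\<in>I. f i x)"
    using assms unfolding bounded_clinear_def by (intro bounded_linear_sum) blast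
  fix c x
  have "(\<Sum>i\<in>I. f i (c *\<^sub>C x)) = (\<Sum>i\<in>I. c *\<^sub>C f i x)"
    using assms unfolding bounded_clinear_def by (intro sum.cong refl) blast
  also have "\<dots> = c *\<^sub>C (\<Sum>i\<in>I. f i x)" by (rule cv.scale_sum_right[symmetric])
  finally show "(\<Sum>i\<in>I. f i (c *\<^sub>C x)) = c *\<^sub>C (\<Sum>i\<in>I. f i x)" .
qed

lemma interp:
  fixes B :: "'a::complex_normed_vector set"
  assumes fin: "finite B" and ind: "cv.independent B"
  shows "\<exists>T. bounded_clinear T \<and> (\<forall>b\<in>B. T b = g b) \<and> range T \<subseteq> cspan (g ` B)"
proof -
  have "\<forall>b\<in>B. \<exists>F. cfunc F \<and> (\<forall>b'\<in>B - {b}. F b' = 0) \<and> F b = 1"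
  proof
    fix b assume b: "b \<in> B"
    have "b \<notin> cspan (B - {b})" using ind b by (auto simp: cv.dependent_def)
    then show "\<exists>F. cfunc F \<and> (\<forall>b'\<in>B - {b}. F b' = 0) \<and> F b = 1"
      using cfunc_sep[of "B - {b}" b] fin by blast
  qed
  then obtain \<Phi> where \<Phi>0: "\<forall>b\<in>B. cfunc (\<Phi> b) \<and> (\<forall>b'\<in>B - {b}. \<Phi> b b' = 0) \<and> \<Phi> b b = 1"
    by (rule bchoice[elim_format]) blast
  have \<Phi>: "\<And>b. b \<in> B \<Longrightarrow> cfunc (\<Phi> b)"
    "\<And>b b'. b \<in> B \<Longrightarrow> b' \<in> B \<Longrightarrow> b' \<noteq> b \<Longrightarrow> \<Phi> b b' = 0" "\<And>b. b \<in> B \<Longrightarrow> \<Phi> b b = 1"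
    using \<Phi>0 by auto
  define T where "T x = (\<Sum>b\<in>B. \<Phi> b x *\<^sub>C g b)" for x
  have "bounded_clinear T" unfolding T_def
    by (rule bclin_sum) (rule cfunc_op[OF \<Phi>(1)])
  moreover have "T b' = g b'" if "b' \<in> B" for b'
  proof -
    have "T b' = (\<Sum>b\<in>B. if b = b' then g b else 0)"
      unfolding T_def by (rule sum.cong) (use \<Phi> that in auto)
    also have "\<dots> = g b'" using fin that by simp
    finally show ?thesis .
  qed
  moreover have "range T \<subseteq> cspan (g ` B)"
  proof
    fix y assume "y \<in> range T"
    then obtain x where "y = T x" by blast
    then show "y \<in> cspan (g ` B)" unfolding T_def
      by (auto intro!: cv.span_sum cv.span_scale intro: cv.span_base)
  qed
  ultimately show ?thesis by blast
qed

lemma K_eig: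
  assumes S: "bounded_clinear S" and v: "S v = l *\<^sub>C v" and l: "l \<noteq> 0"
  shows "v \<in> analytic_core S"
proof -
  define xs where "xs n = (inverse l ^ n) *\<^sub>C v" for n
  have "S (xs (Suc n)) = xs n" for n
    unfolding xs_def using l by (simp add: bclin_lin[OF S] v scaleC_scaleC field_simps)
  moreover have "norm (xs n) \<le> cmod (inverse l) ^ n * norm v" for n
    by (simp add: xs_def norm_scaleC norm_power)
  moreover have "cmod (inverse l) > 0" using l by simp
  moreover have "xs 0 = v" by (simp add: xs_def scaleC_one)
  ultimately show ?thesis unfolding analytic_core_def by blast
qed

lemma K_jord:
  assumes S: "bounded_clinear S" and w: "S w = w" and v: "S v = v + w" and v0: "v \<noteq> 0"
  shows "v \<in> analytic_core S"
proof -
  define xs where "xs n = v - real n *\<^sub>R w" for n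
  define d where "d = 1 + norm w / norm v"
  have "S (xs (Suc n)) = xs n" for n
    unfolding xs_def by (simp add: bclin_lin[OF S] v w algebra_simps)
  moreover have "norm (xs n) \<le> d ^ n * norm v" for n
  proof -
    have h: "-1 \<le> norm w / norm v"
      by (smt (verit) divide_nonneg_nonneg norm_ge_zero)
    have "norm (xs n) \<le> norm v + real n * norm w"
      unfolding xs_def using norm_triangle_ineq4[of v "real n *\<^sub>R w"] by simp
    also have "\<dots> = (1 + real n * (norm w / norm v)) * norm v" using v0 by (simp add: field_simps)
    also have "\<dots> \<le> d ^ n * norm v" unfolding d_def
      by (intro mult_right_mono Bernoulli_inequality h) auto
    finally show ?thesis .
  qed
  moreover have "d > 0" using v0 by (simp add: d_def add_pos_nonneg)
  moreover have "xs 0 = v" by (simp add: xs_def)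
  ultimately show ?thesis unfolding analytic_core_def by blast
qed

lemma K_big:
  assumes "I \<subseteq> K" "cv.independent I" "card I = 3"
  shows "\<not> (cfinite_dim K \<and> cdim K \<le> 2)"
proof
  assume "cfinite_dim K \<and> cdim K \<le> 2"
  then obtain Bf where Bf: "finite Bf" "K \<subseteq> cspan Bf" and d: "cdim K \<le> 2"
    by (auto simp: cfinite_dim_def)
  obtain B' where B': "B' \<subseteq> K" "cv.independent B'" "K \<subseteq> cspan B'" "card B' = cdim K"
    using cv.basis_exists by blast
  have "finite B'" using cv.independent_span_bound[OF Bf(1) B'(2)] B'(1) Bf(2) by blast
  then have "card I \<le> card B'"
    using cv.independent_span_bound[of B' I] assms B' by blast
  then show False using assms B' d by simp
qed

lemma K_sub_range: "(x::'a::real_normed_vector) \<in> analytic_core S \<Longrightarrow> x \<in> range S"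
proof -
  assume "x \<in> analytic_core S"
  then obtain xs :: "nat \<Rightarrow> 'a" where "xs 0 = x" "\<forall>n. S (xs (Suc n)) = xs n"
    unfolding analytic_core_def by blast
  then have "x = S (xs 1)" by simp
  then show ?thesis by blast
qed

lemma dir1:
  assumes A: "bounded_clinear A" and r: "rank_one A" and T: "bounded_clinear T"
  shows "let K = analytic_core (\<lambda>x. T (A x) + A (T x)) in cfinite_dim K \<and> cdim K \<le> 2"
proof -
  obtain B where B: "B \<subseteq> range A" "cv.independent B" "range A \<subseteq> cspan B" "card B = cdim (range A)"
    using cv.basis_exists by blast
  have "card B = 1" using r B(4) unfolding rank_one_def by simp
  then obtain u where Bu: "B = {u}" by (rule card_1_singletonE)
  have Ax: "\<exists>c. A x = c *\<^sub>C u" for x using B(3) Bu by (auto simp: cv.span_singleton)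
  define S where "S x = T (A x) + A (T x)" for x
  have "range S \<subseteq> cspan {u, T u}"
  proof
    fix y assume "y \<in> range S"
    then obtain x where y: "y = S x" by blast
    obtain c where c: "A x = c *\<^sub>C u" using Ax by blast
    obtain c' where c': "A (T x) = c' *\<^sub>C u" using Ax by blast
    have "y = c *\<^sub>C T u + c' *\<^sub>C u" using y c c' by (simp add: S_def bclin_lin[OF T])
    moreover have "c *\<^sub>C T u \<in> cspan {u, T u}" "c' *\<^sub>C u \<in> cspan {u, T u}"
      by (simp_all add: cv.span_base cv.span_scale)
    ultimately show "y \<in> cspan {u, T u}" by (simp add: cv.span_add)
  qed
  then have KS: "analytic_core S \<subseteq> cspan {u, T u}" using K_sub_range by blast
  then have "cfinite_dim (analytic_core S)" unfolding cfinite_dim_def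
    by (intro exI[of _ "{u, T u}"]) simp
  moreover have "cdim (analytic_core S) \<le> card {u, T u}"
    by (rule cv.dim_le_card[OF KS]) simp
  moreover have "card {u, T u} \<le> 2" by (simp add: card_insert_if)
  ultimately show ?thesis unfolding S_def Let_def by simp
qed



lemma notin_span_notin: "x \<notin> cspan S \<Longrightarrow> x \<notin> S"
  using cv.span_base by blast

lemma bclin_S:
  assumes T: "bounded_clinear T" and A: "bounded_clinear A"
  shows "bounded_clinear (\<lambda>x. T (A x) + A (T x))"
proof -
  have "bounded_linear (\<lambda>x. T (A x) + A (T x))"
    using T A unfolding bounded_clinear_def
    by (intro bounded_linear_add) (auto intro: bounded_linear_compose)
  then show ?thesis unfolding bounded_clinear_def
    by (simp add: bclin_lin[OF T] bclin_lin[OF A] scaleC_add_right)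
qed

lemma fix_span:
  assumes S: "bounded_clinear S" and W: "\<And>v. v \<in> W \<Longrightarrow> S v = v" and w: "w \<in> cspan W"
  shows "S w = w"
proof -
  have "cv.subspace {x. S x = x}"
    by (auto simp: cv.subspace_def bclin_lin[OF S])
  then have "cspan W \<subseteq> {x. S x = x}" using W by (intro cv.span_minimal) auto
  then show ?thesis using w by blast
qed

lemma zero_span:
  assumes S: "bounded_clinear S" and W: "\<And>v. v \<in> W \<Longrightarrow> S v = 0" and w: "w \<in> cspan W"
  shows "S w = 0"
proof -
  have "cv.subspace {x. S x = 0}"
    by (auto simp: cv.subspace_def bclin_lin[OF S])
  then have "cspan W \<subseteq> {x. S x = 0}" using W by (intro cv.span_minimal) auto
  then show ?thesis using w by blast
qed

lemma img_span:
  assumes A: "bounded_clinear A" and x: "x \<in> cspan D"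
  shows "A x \<in> cspan (A ` D)"
proof -
  interpret module_hom scaleC scaleC A by (rule bclin_hom[OF A])
  show ?thesis using x by (simp add: span_image)
qed

lemma finish:
  assumes "a \<in> K" "b \<in> K" "c \<in> K" "cv.independent {a, b, c}" "card {a, b, c} = 3"
  shows "\<not> (cfinite_dim K \<and> cdim K \<le> 2)"
  by (rule K_big[of "{a, b, c}"]) (use assms in auto)

lemma caseI:
  fixes A :: "'a::complex_normed_vector \<Rightarrow> 'a"
  assumes A: "bounded_clinear A"
    and I: "\<And>E. finite E \<Longrightarrow> \<exists>x. x \<notin> cspan E \<and> A x \<notin> cspan (insert x E)"
  shows "\<exists>T. bounded_clinear T \<and> \<not> (let K = analytic_core (\<lambda>x. T (A x) + A (T x)) in cfinite_dim K \<and> cdim K \<le> 2)"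
proof -
  obtain x3 where h3: "x3 \<notin> cspan {}" "A x3 \<notin> cspan {x3}" using I[of "{}"] by auto
  obtain x4 where h4: "x4 \<notin> cspan {A x3, x3}" "A x4 \<notin> cspan {x4, A x3, x3}"
    using I[of "{A x3, x3}"] by auto
  obtain x5 where h5: "x5 \<notin> cspan {A x4, x4, A x3, x3}" "A x5 \<notin> cspan {x5, A x4, x4, A x3, x3}"
    using I[of "{A x4, x4, A x3, x3}"] by auto
  define B where "B = {A x5, x5, A x4, x4, A x3, x3}"
  have indB: "cv.independent B" unfolding B_def
    by (intro cv.independent_insertI h3 h4 h5 cv.independent_empty)
  have d3: "x3 \<notin> {}" "A x3 \<notin> {x3}" using h3 by (auto dest: notin_span_notin)
  have d4: "x4 \<notin> {A x3, x3}" "A x4 \<notin> {x4, A x3, x3}" using h4 by (auto dest: notin_span_notin)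
  have d5: "x5 \<notin> {A x4, x4, A x3, x3}" "A x5 \<notin> {x5, A x4, x4, A x3, x3}"
    using h5 by (auto dest: notin_span_notin)
  define g where "g v = (if v = A x3 then x3 else if v = A x4 then x4 else if v = A x5 then x5 else 0)" for v
  obtain T where T: "bounded_clinear T" "\<forall>b\<in>B. T b = g b"
    using interp[OF _ indB, of g] unfolding B_def by auto
  have Tx: "T x3 = 0" "T x4 = 0" "T x5 = 0" "T (A x3) = x3" "T (A x4) = x4" "T (A x5) = x5"
    using T(2) d3 d4 d5 unfolding B_def g_def by auto
  define S where "S x = T (A x) + A (T x)" for x
  have Sb: "bounded_clinear S" unfolding S_def by (rule bclin_S[OF T(1) A])
  have "x3 \<in> analytic_core S" "x4 \<in> analytic_core S" "x5 \<in> analytic_core S"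
    by (rule K_eig[OF Sb _ one_neq_zero], simp add: S_def Tx bclin_lin[OF A] scaleC_one)+
  moreover have "cv.independent {x5, x4, x3}"
    by (rule cv.independent_mono[OF indB]) (auto simp: B_def)
  moreover have "card {x5, x4, x3} = 3" using d3 d4 d5 by auto
  ultimately have "\<not> (cfinite_dim (analytic_core S) \<and> cdim (analytic_core S) \<le> 2)"
    by (intro finish) auto
  then show ?thesis using T(1) unfolding S_def Let_def by blast
qed



lemma caseK:
  fixes A :: "'a::complex_normed_vector \<Rightarrow> 'a"
  assumes A: "bounded_clinear A"
    and Kh: "\<And>E. finite E \<Longrightarrow> \<exists>z. z \<notin> cspan E \<and> A z = 0"
    and y1: "A x1 \<notin> cspan {}" and y2: "A x2 \<notin> cspan {A x1}"
  shows "\<exists>T. bounded_clinear T \<and> \<not> (let K = analytic_core (\<lambda>x. T (A x) + A (T x)) in cfinite_dim K \<and> cdim K \<le> 2)"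
proof -
  define u1 where "u1 = A x1"
  define u2 where "u2 = A x2"
  obtain z1 where z1: "z1 \<notin> cspan {u2, u1, x2, x1}" "A z1 = 0" using Kh[of "{u2, u1, x2, x1}"] by auto
  obtain z2 where z2: "z2 \<notin> cspan {z1, u2, u1, x2, x1}" "A z2 = 0" using Kh[of "{z1, u2, u1, x2, x1}"] by auto
  define p1 where "p1 = x1 + z1"
  define p2 where "p2 = x2 + z2"
  have Ap: "A p1 = u1" "A p2 = u2" by (simp_all add: p1_def p2_def u1_def u2_def bclin_lin[OF A] z1 z2)
  have hp1: "p1 \<notin> cspan {u2, u1}"
  proof
    assume "p1 \<in> cspan {u2, u1}"
    then have "p1 \<in> cspan {u2, u1, x2, x1}" by (rule subsetD[OF cv.span_mono, rotated]) auto
    moreover have "x1 \<in> cspan {u2, u1, x2, x1}" by (simp add: cv.span_base)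
    ultimately have "p1 - x1 \<in> cspan {u2, u1, x2, x1}" by (rule cv.span_diff)
    then show False using z1 by (simp add: p1_def)
  qed
  have hp2: "p2 \<notin> cspan {p1, u2, u1}"
  proof
    assume "p2 \<in> cspan {p1, u2, u1}"
    moreover have "cspan {p1, u2, u1} \<subseteq> cspan {z1, u2, u1, x2, x1}"
    proof (rule cv.span_minimal)
      have "p1 \<in> cspan {z1, u2, u1, x2, x1}" unfolding p1_def
        by (intro cv.span_add cv.span_base) auto
      then show "{p1, u2, u1} \<subseteq> cspan {z1, u2, u1, x2, x1}" by (auto intro: cv.span_base)
    qed simp
    ultimately have "p2 \<in> cspan {z1, u2, u1, x2, x1}" by blast
    moreover have "x2 \<in> cspan {z1, u2, u1, x2, x1}" by (simp add: cv.span_base)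
    ultimately have "p2 - x2 \<in> cspan {z1, u2, u1, x2, x1}" by (rule cv.span_diff)
    then show False using z2 by (simp add: p2_def)
  qed
  define B where "B = {p2, p1, u2, u1}"
  have indB: "cv.independent B" unfolding B_def
    by (intro cv.independent_insertI hp1 hp2 cv.independent_empty)
       (use y1 y2 in \<open>simp_all add: u1_def u2_def\<close>)
  have d: "u1 \<notin> {}" "u2 \<notin> {u1}" "p1 \<notin> {u2, u1}" "p2 \<notin> {p1, u2, u1}"
    using hp1 hp2 y1 y2 by (auto simp: u1_def u2_def dest: notin_span_notin)
  define g where "g v = (if v = u1 then p1 else if v = u2 then p2 else 0)" for v
  obtain T where T: "bounded_clinear T" "\<forall>b\<in>B. T b = g b" "range T \<subseteq> cspan (g ` B)"
    using interp[OF _ indB, of g] unfolding B_def by auto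
  have Tx: "T p1 = 0" "T p2 = 0" "T u1 = p1" "T u2 = p2"
    using T(2) d unfolding B_def g_def by auto
  define S where "S x = T (A x) + A (T x)" for x
  have Sb: "bounded_clinear S" unfolding S_def by (rule bclin_S[OF T(1) A])
  have Sp: "S p1 = p1" "S p2 = p2" by (simp_all add: S_def Tx Ap bclin_lin[OF A])
  have gB: "g ` B \<subseteq> {0, p1, p2}" unfolding g_def by auto
  have Sfix: "S v = v" if "v \<in> g ` B" for v
    using that gB Sp bclin_lin[OF Sb] by auto
  define w where "w = T (A u1)"
  have w: "S w = w"
    by (rule fix_span[OF Sb Sfix]) (use T(3) in \<open>auto simp: w_def\<close>)
  have Su1: "S u1 = u1 + w" by (simp add: S_def w_def Tx Ap add.commute)
  have "p1 \<in> analytic_core S" "p2 \<in> analytic_core S"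
    by (rule K_eig[OF Sb _ one_neq_zero], simp add: Sp scaleC_one)+
  moreover have "u1 \<in> analytic_core S"
    by (rule K_jord[OF Sb w Su1]) (use y1 in \<open>simp add: u1_def\<close>)
  moreover have "cv.independent {p2, p1, u1}"
    by (rule cv.independent_mono[OF indB]) (auto simp: B_def)
  moreover have "card {p2, p1, u1} = 3" using d by auto
  ultimately have "\<not> (cfinite_dim (analytic_core S) \<and> cdim (analytic_core S) \<le> 2)"
    by (intro finish) auto
  then show ?thesis using T(1) unfolding S_def Let_def by blast
qed



lemma PH:
  fixes A :: "'a::complex_normed_vector \<Rightarrow> 'a"
  assumes A: "bounded_clinear A" and E1: "finite E1" "\<And>z. A z = 0 \<Longrightarrow> z \<in> cspan E1"
    and D: "finite D"
  shows "\<exists>E0. finite E0 \<and> (\<forall>x. A x \<in> cspan D \<longrightarrow> x \<in> cspan E0)"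
proof -
  define N where "N = {x. A x \<in> cspan D}"
  obtain C where C: "C \<subseteq> A ` N" "cv.independent C" "A ` N \<subseteq> cspan C"
    using cv.maximal_independent_subset[of "A ` N"] by blast
  have "C \<subseteq> cspan D" using C(1) by (auto simp: N_def)
  then have finC: "finite C" using cv.independent_span_bound[OF D C(2)] by blast
  have "\<forall>c\<in>C. \<exists>x. x \<in> N \<and> A x = c" using C(1) by auto
  then obtain p where p: "\<forall>c\<in>C. p c \<in> N \<and> A (p c) = c" by (rule bchoice[elim_format]) blast
  have ApC: "A ` (p ` C) = C"
  proof -
    have "A ` (p ` C) = (\<lambda>c. A (p c)) ` C" by (simp add: image_image)
    also have "\<dots> = (\<lambda>c. c) ` C" using p by (intro image_cong) auto
    finally show ?thesis by simp
  qed
  define E0 where "E0 = E1 \<union> p ` C"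
  have "x \<in> cspan E0" if x: "A x \<in> cspan D" for x
  proof -
    interpret module_hom scaleC scaleC A by (rule bclin_hom[OF A])
    have "A x \<in> cspan C" using x C(3) by (auto simp: N_def)
    then have "A x \<in> A ` cspan (p ` C)" using span_image[of "p ` C"] ApC by simp
    then obtain q where q: "q \<in> cspan (p ` C)" "A q = A x" by auto
    have "A (x - q) = 0" using q(2) by (simp add: bclin_lin[OF A])
    then have "x - q \<in> cspan E1" by (rule E1(2))
    then have "x - q \<in> cspan E0" unfolding E0_def by (rule subsetD[OF cv.span_mono, rotated]) auto
    moreover have "q \<in> cspan E0" using q(1) unfolding E0_def
      by (rule subsetD[OF cv.span_mono, rotated]) auto
    ultimately have "(x - q) + q \<in> cspan E0" by (rule cv.span_add)
    then show ?thesis by simp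
  qed
  moreover have "finite E0" using E1(1) finC by (simp add: E0_def)
  ultimately show ?thesis by blast
qed

lemma caseR:
  fixes A :: "'a::complex_normed_vector \<Rightarrow> 'a"
  assumes A: "bounded_clinear A" and nfd: "\<not> cfinite_dim (UNIV :: 'a set)"
    and D: "finite D" "\<And>x. x \<notin> cspan D \<Longrightarrow> A x \<in> cspan (insert x D)"
    and E0: "finite E0" "\<And>x. A x \<in> cspan D \<Longrightarrow> x \<in> cspan E0"
  shows "\<exists>T. bounded_clinear T \<and> \<not> (let K = analytic_core (\<lambda>x. T (A x) + A (T x)) in cfinite_dim K \<and> cdim K \<le> 2)"
proof -
  have fresh: "\<exists>x. x \<notin> cspan E" if fE: "finite E" for E :: "'a set"
  proof (rule ccontr)
    assume "\<not> (\<exists>x. x \<notin> cspan E)"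
    then have "UNIV \<subseteq> cspan E" by auto
    with fE nfd show False unfolding cfinite_dim_def by blast
  qed
  define G where "G = D \<union> A ` D \<union> E0"
  have finG: "finite G" using D(1) E0(1) by (simp add: G_def)
  obtain m1 where m1: "m1 \<notin> cspan G" using fresh[OF finG] by blast
  obtain m2 where m2: "m2 \<notin> cspan (insert m1 G)" using fresh[of "insert m1 G"] finG by auto
  obtain m3 where m3: "m3 \<notin> cspan (insert m2 (insert m1 G))"
    using fresh[of "insert m2 (insert m1 G)"] finG by auto
  have DsubG: "D \<subseteq> G" "E0 \<subseteq> G" by (auto simp: G_def)
  have mk: "\<exists>a. a \<noteq> 0 \<and> A m - a *\<^sub>C m \<in> cspan D" if H: "G \<subseteq> H" "m \<notin> cspan H" for m H
  proof -
    have GH: "cspan G \<subseteq> cspan H" using H(1) by (rule cv.span_mono)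
    have "m \<notin> cspan D" using H(2) GH cv.span_mono[OF DsubG(1)] by blast
    then have "A m \<in> cspan (insert m D)" by (rule D(2))
    then obtain a where a: "A m - a *\<^sub>C m \<in> cspan D" using cv.span_breakdown_eq by blast
    have "a \<noteq> 0"
    proof
      assume "a = 0"
      then have "A m \<in> cspan D" using a by simp
      then have "m \<in> cspan E0" by (rule E0(2))
      then have "m \<in> cspan G" using cv.span_mono[OF DsubG(2)] by blast
      then show False using GH H(2) by blast
    qed
    then show ?thesis using a by blast
  qed
  obtain a1 where a1: "a1 \<noteq> 0" "A m1 - a1 *\<^sub>C m1 \<in> cspan D" using mk[of G m1] m1 by blast
  obtain a2 where a2: "a2 \<noteq> 0" "A m2 - a2 *\<^sub>C m2 \<in> cspan D" using mk[of "insert m1 G" m2] m2 by blast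
  obtain a3 where a3: "a3 \<noteq> 0" "A m3 - a3 *\<^sub>C m3 \<in> cspan D"
    using mk[of "insert m2 (insert m1 G)" m3] m3 by blast
  obtain BG where BG: "BG \<subseteq> G" "cv.independent BG" "G \<subseteq> cspan BG"
    using cv.maximal_independent_subset[of G] by blast
  have spBG: "cspan BG = cspan G"
  proof
    show "cspan BG \<subseteq> cspan G" using BG(1) by (rule cv.span_mono)
    show "cspan G \<subseteq> cspan BG" using BG(3) by (rule cv.span_minimal) simp
  qed
  have finBG: "finite BG" using BG(1) finG finite_subset by blast
  have sp1: "cspan (insert m1 BG) \<subseteq> cspan (insert m1 G)" using BG(1) by (intro cv.span_mono) auto
  have sp2: "cspan (insert m2 (insert m1 BG)) \<subseteq> cspan (insert m2 (insert m1 G))"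
    using BG(1) by (intro cv.span_mono) auto
  define B where "B = insert m3 (insert m2 (insert m1 BG))"
  have indB: "cv.independent B" unfolding B_def
    using m1 m2 m3 sp1 sp2 spBG BG(2) by (intro cv.independent_insertI) auto
  have dm: "m1 \<notin> G" "m2 \<notin> insert m1 G" "m3 \<notin> insert m2 (insert m1 G)"
    using m1 m2 m3 by (auto dest: notin_span_notin)
  have mBG: "m1 \<notin> BG" "m2 \<notin> BG" "m3 \<notin> BG" using dm BG(1) by auto
  define g where "g v = (if v \<in> {m1, m2, m3} then v else 0)" for v
  obtain T where T: "bounded_clinear T" "\<forall>b\<in>B. T b = g b"
    using interp[OF _ indB, of g] finBG unfolding B_def by auto
  have Tm: "T m1 = m1" "T m2 = m2" "T m3 = m3" using T(2) by (auto simp: B_def g_def)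
  have TBG: "T b = 0" if "b \<in> BG" for b using T(2) that mBG by (auto simp: B_def g_def)
  have TG: "T v = 0" if "v \<in> cspan G" for v
    using zero_span[OF T(1) TBG] that spBG by blast
  have DG: "cspan D \<subseteq> cspan G" by (rule cv.span_mono) (auto simp: G_def)
  have ADG: "cspan (A ` D) \<subseteq> cspan G" by (rule cv.span_mono) (auto simp: G_def)
  define S where "S x = T (A x) + A (T x)" for x
  have Sb: "bounded_clinear S" unfolding S_def by (rule bclin_S[OF T(1) A])
  have eig: "S (m + inverse (2 * a) *\<^sub>C r) = (2 * a) *\<^sub>C (m + inverse (2 * a) *\<^sub>C r)"
    if h: "A m = a *\<^sub>C m + r" "a \<noteq> 0" "T m = m" "r \<in> cspan D" for m a r
  proof -
    have Tr: "T r = 0" using h(4) DG TG by blast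
    have TAr: "T (A r) = 0" using img_span[OF A h(4)] ADG TG by blast
    have Sm: "S m = (2 * a) *\<^sub>C m + r"
      by (simp add: S_def h(1,3) bclin_lin[OF T(1)] Tr scaleC_add_left[symmetric] algebra_simps)
    have Sr: "S r = 0" by (simp add: S_def TAr Tr bclin_lin[OF A])
    have "S (m + inverse (2 * a) *\<^sub>C r) = (2 * a) *\<^sub>C m + r"
      by (simp add: bclin_lin[OF Sb] Sm Sr)
    also have "\<dots> = (2 * a) *\<^sub>C (m + inverse (2 * a) *\<^sub>C r)"
      using h(2) by (simp add: scaleC_add_right scaleC_scaleC scaleC_one)
    finally show ?thesis .
  qed
  define r1 where "r1 = A m1 - a1 *\<^sub>C m1"
  define r2 where "r2 = A m2 - a2 *\<^sub>C m2"
  define r3 where "r3 = A m3 - a3 *\<^sub>C m3"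
  define e1 where "e1 = m1 + inverse (2 * a1) *\<^sub>C r1"
  define e2 where "e2 = m2 + inverse (2 * a2) *\<^sub>C r2"
  define e3 where "e3 = m3 + inverse (2 * a3) *\<^sub>C r3"
  have "e1 \<in> analytic_core S"
  proof (rule K_eig[OF Sb])
    show "S e1 = (2 * a1) *\<^sub>C e1" unfolding e1_def
      by (rule eig) (use a1 Tm in \<open>auto simp: r1_def\<close>)
    show "2 * a1 \<noteq> 0" using a1 by simp
  qed
  moreover have "e2 \<in> analytic_core S"
  proof (rule K_eig[OF Sb])
    show "S e2 = (2 * a2) *\<^sub>C e2" unfolding e2_def
      by (rule eig) (use a2 Tm in \<open>auto simp: r2_def\<close>)
    show "2 * a2 \<noteq> 0" using a2 by simp
  qed
  moreover have "e3 \<in> analytic_core S"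
  proof (rule K_eig[OF Sb])
    show "S e3 = (2 * a3) *\<^sub>C e3" unfolding e3_def
      by (rule eig) (use a3 Tm in \<open>auto simp: r3_def\<close>)
    show "2 * a3 \<noteq> 0" using a3 by simp
  qed
  moreover
  have sep: "m + c *\<^sub>C r \<notin> cspan F"
    if h: "G \<subseteq> H" "m \<notin> cspan H" "r \<in> cspan D" "F \<subseteq> cspan H" for m c r F H
  proof
    assume "m + c *\<^sub>C r \<in> cspan F"
    moreover have "cspan F \<subseteq> cspan H" using h(4) by (rule cv.span_minimal) simp
    ultimately have 1: "m + c *\<^sub>C r \<in> cspan H" by blast
    have "r \<in> cspan H" using h(3) DG cv.span_mono[OF h(1)] by blast
    then have "c *\<^sub>C r \<in> cspan H" by (rule cv.span_scale)
    with 1 have "(m + c *\<^sub>C r) - c *\<^sub>C r \<in> cspan H" by (rule cv.span_diff)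
    then show False using h(2) by simp
  qed
  have inG: "m + c *\<^sub>C r \<in> cspan H" if "m \<in> H" "G \<subseteq> H" "r \<in> cspan D" for m c r H
  proof -
    have rH: "r \<in> cspan H" using that(3) DG cv.span_mono[OF that(2)] by blast
    show ?thesis by (rule cv.span_add[OF cv.span_base[OF that(1)] cv.span_scale[OF rH]])
  qed
  have n1: "e1 \<notin> cspan {}" unfolding e1_def by (rule sep[of G]) (use m1 a1 in \<open>auto simp: r1_def\<close>)
  have n2: "e2 \<notin> cspan {e1}" unfolding e2_def
    by (rule sep[of "insert m1 G"]) (use m2 a2 a1 in \<open>auto simp: r2_def r1_def e1_def intro!: inG\<close>)
  have n3: "e3 \<notin> cspan {e2, e1}" unfolding e3_def
    by (rule sep[of "insert m2 (insert m1 G)"])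
       (use m3 a3 a2 a1 in \<open>auto simp: r3_def r2_def r1_def e2_def e1_def intro!: inG\<close>)
  have "cv.independent {e3, e2, e1}"
    using n1 n2 n3 by (intro cv.independent_insertI cv.independent_empty)
  moreover have "card {e3, e2, e1} = 3"
  proof -
    have "e2 \<notin> {e1}" "e3 \<notin> {e2, e1}" using n2 n3 notin_span_notin by blast+
    then show ?thesis by simp
  qed
  ultimately have "\<not> (cfinite_dim (analytic_core S) \<and> cdim (analytic_core S) \<le> 2)"
    by (intro finish) auto
  then show ?thesis using T(1) unfolding S_def Let_def by blast
qed



theorem lemma2p3:
  fixes A :: "'a::{complex_normed_vector, banach} \<Rightarrow> 'a"
  assumes "\<not> cfinite_dim (UNIV :: 'a set)"
    and "bounded_clinear A"
    and "A \<noteq> (\<lambda>x. 0)"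
  shows "rank_one A \<longleftrightarrow>
    (\<forall>T :: 'a \<Rightarrow> 'a. bounded_clinear T \<longrightarrow>
       (let K = analytic_core (\<lambda>x. T (A x) + A (T x)) in cfinite_dim K \<and> cdim K \<le> 2))"
proof
  assume r: "rank_one A"
  show "\<forall>T :: 'a \<Rightarrow> 'a. bounded_clinear T \<longrightarrow>
       (let K = analytic_core (\<lambda>x. T (A x) + A (T x)) in cfinite_dim K \<and> cdim K \<le> 2)"
    using dir1[OF assms(2) r] by blast
next
  assume ii: "\<forall>T :: 'a \<Rightarrow> 'a. bounded_clinear T \<longrightarrow>
       (let K = analytic_core (\<lambda>x. T (A x) + A (T x)) in cfinite_dim K \<and> cdim K \<le> 2)"
  have A: "bounded_clinear A" by (rule assms(2))
  show "rank_one A"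
  proof (rule ccontr)
    assume nr: "\<not> rank_one A"
    obtain x1 where x1: "A x1 \<noteq> 0" using assms(3) by (auto simp: fun_eq_iff)
    have y1: "A x1 \<notin> cspan {}" using x1 by simp
    have "\<exists>x2. A x2 \<notin> cspan {A x1}"
    proof (rule ccontr)
      assume "\<not> (\<exists>x2. A x2 \<notin> cspan {A x1})"
      then have sub: "range A \<subseteq> cspan {A x1}" by blast
      have "cfinite_dim (range A)" unfolding cfinite_dim_def
        using sub by (intro exI[of _ "{A x1}"]) simp
      moreover have "cdim (range A) = 1"
        by (rule cv.dim_unique[of "{A x1}"]) (use sub x1 in auto)
      ultimately show False using nr unfolding rank_one_def by blast
    qed
    then obtain x2 where y2: "A x2 \<notin> cspan {A x1}" by blast
    have "\<exists>T. bounded_clinear T \<and> \<not> (let K = analytic_core (\<lambda>x. T (A x) + A (T x)) in cfinite_dim K \<and> cdim K \<le> 2)"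
    proof (cases "\<forall>E. finite E \<longrightarrow> (\<exists>z. z \<notin> cspan E \<and> A z = (0::'a))")
      case True
      then show ?thesis using caseK[OF A _ y1 y2] by blast
    next
      case False
      then obtain E1 :: "'a set" where E1: "finite E1" "\<And>z. A z = 0 \<Longrightarrow> z \<in> cspan E1" by blast
      show ?thesis
      proof (cases "\<forall>E. finite E \<longrightarrow> (\<exists>x. x \<notin> cspan E \<and> A x \<notin> cspan (insert x E))")
        case True
        then show ?thesis using caseI[OF A] by blast
      next
        case False
        then obtain D :: "'a set" where D: "finite D" "\<And>x. x \<notin> cspan D \<Longrightarrow> A x \<in> cspan (insert x D)"
          by blast
        obtain E0 where E0: "finite E0" "\<And>x. A x \<in> cspan D \<Longrightarrow> x \<in> cspan E0"
          using PH[OF A E1 D(1)] by blast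
        show ?thesis by (rule caseR[OF A assms(1) D E0])
      qed
    qed
    then show False using ii by blast
  qed
qed


end
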